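(* In the public bug bounty model described in the context, let $\kappa_a(\overline v)$ be the largest fixed point in $[0,\infty)$ of $\hat\kappa\mapsto\overline v\,\frac{1-e^{-\hat\kappa}}{\underline c}$. Then $\kappa_a(\overline v)$ is increasing in $\overline v$ and $K(\overline v)=[0,\kappa_a(\overline v)]$, where $$K(\overline v)=\Big\{\hat\kappa:\ \hat\kappa=\Psi_\infty(\hat\kappa;\boldsymbol v,v_a,q_a),\ \sum_lv^l+v_a\le\overline v,\ v^l\ge0,\ v_a\ge0,\ q_a\in[0,1]\Big\}$$ and $\Psi_\infty(\hat\kappa;\boldsymbol v,v_a,q_a)=\sum_lv^l\mu^l\frac{1-e^{-q^l\hat\kappa}}{\underline c}+v_a\frac{1-e^{-q_a\hat\kappa}}{\underline c}$.
   Context: There are $L$ potential organic bugs; bug $l$ exists with probability $\mu^l\in(0,1]$ and has complexity $q^l\in(0,1]$. $\underline c>0$ is the lower end of the support of the agents' cost distribution. The designer has budget $\overline v>0$ with $\overline v\ge\underline c$, sets prizes $v^l\ge0$ for organic bugs, and one artificial bug with prize $v_a\ge0$ and complexity $q_a\in[0,1]$. *)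

theory Defs
  imports Complex_Main
begin

definition kappa_a :: "real \<Rightarrow> real \<Rightarrow> real" where
  "kappa_a c vbar = (GREATEST k. k \<ge> 0 \<and> k = vbar * (1 - exp (- k)) / c)"

definition Psi_inf :: "nat \<Rightarrow> (nat \<Rightarrow> real) \<Rightarrow> (nat \<Rightarrow> real) \<Rightarrow> real
    \<Rightarrow> real \<Rightarrow> (nat \<Rightarrow> real) \<Rightarrow> real \<Rightarrow> real \<Rightarrow> real" where
  "Psi_inf L mu q c k v va qa =
     (\<Sum>l<L. v l * mu l * (1 - exp (- q l * k)) / c) + va * (1 - exp (- qa * k)) / c"

definition K_set :: "nat \<Rightarrow> (nat \<Rightarrow> real) \<Rightarrow> (nat \<Rightarrow> real) \<Rightarrow> real \<Rightarrow> real \<Rightarrow> real set" where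
  "K_set L mu q c vbar =
     {k. k \<ge> 0 \<and> (\<exists>v va qa. k = Psi_inf L mu q c k v va qa
          \<and> (\<Sum>l<L. v l) + va \<le> vbar \<and> (\<forall>l<L. v l \<ge> 0) \<and> va \<ge> 0
          \<and> qa \<in> {0..1})}"

end

theory Submission
  imports Defs
begin

lemma h_dec:
  fixes a x y :: real
  assumes a: "a \<ge> 1" and x: "ln a \<le> x" and xy: "x < y"
  shows "a * (1 - exp (- x)) - x > a * (1 - exp (- y)) - y"
proof -
  define d where "d = y - x"
  have d: "d > 0" using xy unfolding d_def by simp
  have ey: "exp (- y) = exp (- x) * exp (- d)" by (simp add: d_def flip: exp_add)
  have "a * exp (- x) \<le> a * exp (- ln a)" using x a by simp
  also have "\<dots> = 1" using a by (simp add: exp_minus)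
  finally have ax: "a * exp (- x) \<le> 1" .
  have h1: "exp (- (d/2)) \<ge> 1 - d/2" using exp_ge_add_one_self[of "-(d/2)"] by simp
  have h2: "exp (- (d/2)) < 1" using d by simp
  have h3: "exp (- d) = exp (- (d/2)) * exp (- (d/2))" by (simp flip: exp_add)
  have "1 - exp (- d) = (1 - exp (- (d/2))) * (1 + exp (- (d/2)))" using h3 by (simp add: algebra_simps)
  also have "\<dots> \<le> (d/2) * (1 + exp (- (d/2)))" using h1 by (intro mult_right_mono) auto
  also have "\<dots> < (d/2) * 2" using h2 d by (intro mult_strict_left_mono) auto
  finally have "1 - exp (- d) < d" by simp
  moreover have "1 - exp (- d) \<ge> 0" using d by simp
  ultimately have "a * exp (- x) * (1 - exp (- d)) < d"
    using ax by (smt (verit, best) mult_left_le_one_le mult_nonneg_nonneg exp_gt_zero a)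
  thus ?thesis by (simp add: ey d_def algebra_simps)
qed

lemma h_inc:
  fixes a k :: real
  assumes a: "a \<ge> 1" and x: "0 \<le> k" and xy: "k \<le> ln a"
  shows "a * (1 - exp (- k)) - k \<ge> 0"
proof -
  have "a * exp (- k) \<ge> a * exp (- ln a)" using xy a by (intro mult_left_mono) auto
  also have "a * exp (- ln a) = 1" using a by (simp add: exp_minus)
  finally have ak: "a * exp (- k) \<ge> 1" .
  have e: "exp k \<ge> 1 + k" by (rule exp_ge_add_one_self)
  have "a = a * exp (- k) * exp k" by (simp flip: exp_add)
  hence "a - a * exp (-k) = a * exp (- k) * (exp k - 1)" by (simp add: algebra_simps)
  also have "\<dots> \<ge> 1 * (exp k - 1)" using ak e x by (intro mult_right_mono) auto
  finally have "a - a * exp (-k) \<ge> exp k - 1" by simp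
  hence "k \<le> a - a * exp (-k)" using e by linarith
  thus ?thesis by (simp add: right_diff_distrib)
qed

lemma key:
  assumes a: "a \<ge> (1::real)"
  shows "\<exists>\<kappa>\<ge>ln a. a * (1 - exp (- \<kappa>)) = \<kappa> \<and>
           (\<forall>k\<ge>0. k \<le> a * (1 - exp (- k)) \<longleftrightarrow> k \<le> \<kappa>)"
proof -
  define h where "h k = a * (1 - exp (- k)) - k" for k
  have lna: "ln a \<le> a" using a ln_le_minus_one[of a] by simp
  have lnp: "ln a \<ge> 0" using a by simp
  have "h a \<le> 0" unfolding h_def using a by (simp add: algebra_simps)
  moreover have "0 \<le> h (ln a)" unfolding h_def using h_inc[OF a lnp] by simp
  moreover have "\<forall>x. ln a \<le> x \<and> x \<le> a \<longrightarrow> isCont h x" unfolding h_def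
    by (auto intro!: continuous_intros)
  ultimately obtain \<kappa> where k1: "\<kappa> \<ge> ln a" "\<kappa> \<le> a" "h \<kappa> = 0"
    using IVT2[of h a 0 "ln a"] lna by auto
  have "\<forall>k\<ge>0. k \<le> a * (1 - exp (- k)) \<longleftrightarrow> k \<le> \<kappa>"
  proof (intro allI impI)
    fix k :: real assume k0: "k \<ge> 0"
    show "k \<le> a * (1 - exp (- k)) \<longleftrightarrow> k \<le> \<kappa>"
    proof (cases "k \<le> ln a")
      case True
      then show ?thesis using h_inc[OF a k0 True] k1 by auto
    next
      case False
      show ?thesis
      proof (cases "k < \<kappa>")
        case True
        then show ?thesis using h_dec[OF a _ True] False k1 unfolding h_def by auto
      next
        case F2: False
        show ?thesis
        proof (cases "k = \<kappa>")
          case True thus ?thesis using k1 unfolding h_def by auto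
        next
          case False
          hence "\<kappa> < k" using F2 by simp
          then show ?thesis using h_dec[OF a k1(1) \<open>\<kappa> < k\<close>] k1 unfolding h_def by auto
        qed
      qed
    qed
  qed
  thus ?thesis using k1 unfolding h_def by (intro exI[of _ \<kappa>]) auto
qed

lemma kappa_char:
  assumes c: "c > 0" and v: "v \<ge> c"
  shows "kappa_a c v \<ge> ln (v / c) \<and> v / c * (1 - exp (- kappa_a c v)) = kappa_a c v \<and>
           (\<forall>k\<ge>0. k \<le> v / c * (1 - exp (- k)) \<longleftrightarrow> k \<le> kappa_a c v)"
proof -
  have a: "v / c \<ge> 1" using c v by simp
  obtain \<kappa> where k: "\<kappa> \<ge> ln (v/c)" "v/c * (1 - exp (- \<kappa>)) = \<kappa>"
     "\<forall>k\<ge>0. k \<le> v/c * (1 - exp (- k)) \<longleftrightarrow> k \<le> \<kappa>"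
    using key[OF a] by blast
  have eq: "\<And>k. v * (1 - exp (- k)) / c = v/c * (1 - exp (- k))" by simp
  have "kappa_a c v = \<kappa>"
    unfolding kappa_a_def eq
  proof (rule Greatest_equality)
    show "0 \<le> \<kappa> \<and> \<kappa> = v / c * (1 - exp (- \<kappa>))" using k a by (smt (verit) ln_ge_zero)
    fix y assume "0 \<le> y \<and> y = v / c * (1 - exp (- y))"
    thus "y \<le> \<kappa>" using k(3) by auto
  qed
  thus ?thesis using k by simp
qed

theorem lemma6:
  fixes L :: nat and mu q :: "nat \<Rightarrow> real" and c vbar :: real
  assumes mu: "\<forall>l<L. 0 < mu l \<and> mu l \<le> 1"
    and q: "\<forall>l<L. 0 < q l \<and> q l \<le> 1"
    and c: "c > 0"
    and vbar: "vbar \<ge> c"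
  shows "strict_mono_on {c..} (kappa_a c) \<and> K_set L mu q c vbar = {0..kappa_a c vbar}"
proof
  show "strict_mono_on {c..} (kappa_a c)"
  proof (rule strict_mono_onI)
    fix v1 v2 assume v1: "v1 \<in> {c..}" and v2: "v2 \<in> {c..}" and lt: "v1 < v2"
    have c1: "v1 \<ge> c" "v2 \<ge> c" using v1 v2 by auto
    note K1 = kappa_char[OF c c1(1)] and K2 = kappa_char[OF c c1(2)]
    have k1p: "kappa_a c v1 \<ge> 0" using K1 c c1 by (smt (verit) ln_ge_zero le_divide_eq_1_pos)
    show "kappa_a c v1 < kappa_a c v2"
    proof (cases "kappa_a c v1 = 0")
      case True
      have "v2 / c > 1" using c c1 lt by simp
      hence "ln (v2/c) > 0" by simp
      thus ?thesis using True K2 by linarith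
    next
      case False
      define k where "k = kappa_a c v1"
      have kp: "k > 0" using False k1p k_def by simp
      have e: "1 - exp (- k) > 0" using kp by simp
      have "v1 / c < v2 / c" using lt c by (simp add: divide_strict_right_mono)
      hence "v1/c * (1 - exp (- k)) < v2/c * (1 - exp (- k))" using e by (rule mult_strict_right_mono)
      hence lt2: "k < v2/c * (1 - exp (- k))" using K1 k_def by simp
      hence "k \<le> v2/c * (1 - exp (- k))" by simp
      hence "k \<le> kappa_a c v2" using K2 kp by (meson less_imp_le)
      moreover have "k \<noteq> kappa_a c v2" using K2 lt2 by auto
      ultimately show ?thesis using k_def by simp
    qed
  qed
next
  note K = kappa_char[OF c vbar]
  have a: "vbar / c \<ge> 1" using c vbar by simp
  show "K_set L mu q c vbar = {0..kappa_a c vbar}"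
  proof
    show "K_set L mu q c vbar \<subseteq> {0..kappa_a c vbar}"
    proof
      fix k assume "k \<in> K_set L mu q c vbar"
      then obtain v va qa where k0: "k \<ge> 0" and keq: "k = Psi_inf L mu q c k v va qa"
        and sv: "(\<Sum>l<L. v l) + va \<le> vbar" and vp: "\<forall>l<L. v l \<ge> 0" and va: "va \<ge> 0"
        and qa: "qa \<in> {0..1}"
        unfolding K_set_def by auto
      define E where "E = 1 - exp (- k)"
      have E0: "E \<ge> 0" using k0 E_def by simp
      have t: "v l * mu l * (1 - exp (- q l * k)) / c \<le> v l * E / c" if "l < L" for l
      proof -
        have "q l * k \<le> k" using q that k0 by (intro mult_left_le_one_le) auto
        hence "exp (- k) \<le> exp (- q l * k)" by simp
        hence "1 - exp (- q l * k) \<le> E" using E_def by simp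
        moreover have "0 \<le> q l * k" using q that k0 by (intro mult_nonneg_nonneg) auto
        hence "1 - exp (- q l * k) \<ge> 0" by simp
        ultimately have "mu l * (1 - exp (- q l * k)) \<le> E"
          using mu that by (smt (verit) mult_left_le_one_le)
        hence "v l * (mu l * (1 - exp (- q l * k))) \<le> v l * E"
          using vp that by (simp add: mult_left_mono)
        thus ?thesis using c by (simp add: divide_right_mono mult.assoc)
      qed
      have ta: "va * (1 - exp (- qa * k)) / c \<le> va * E / c"
      proof -
        have "qa * k \<le> k" using qa k0 by (intro mult_left_le_one_le) auto
        hence "exp (- k) \<le> exp (- qa * k)" by simp
        hence "1 - exp (- qa * k) \<le> E" using E_def by simp
        thus ?thesis using va c by (simp add: divide_right_mono mult_left_mono)
      qed
      have "k \<le> (\<Sum>l<L. v l * E / c) + va * E / c"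
        using keq sum_mono[of "{..<L}", OF t] ta unfolding Psi_inf_def by fastforce
      also have "\<dots> = ((\<Sum>l<L. v l) + va) * E / c"
        by (simp add: sum_divide_distrib[symmetric] sum_distrib_right[symmetric] add_divide_distrib distrib_right)
      also have "\<dots> \<le> vbar * E / c" using sv E0 c
        by (simp add: divide_right_mono mult_right_mono)
      finally have "k \<le> vbar / c * (1 - exp (- k))" using E_def by simp
      thus "k \<in> {0..kappa_a c vbar}" using K k0 by auto
    qed
  next
    show "{0..kappa_a c vbar} \<subseteq> K_set L mu q c vbar"
    proof
      fix k assume kin: "k \<in> {0..kappa_a c vbar}"
      show "k \<in> K_set L mu q c vbar"
      proof (cases "k = 0")
        case True
        thus ?thesis unfolding K_set_def Psi_inf_def using vbar c
          by (intro CollectI conjI exI[of _ "\<lambda>_. 0"] exI[of _ 0]) auto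
      next
        case False
        hence kp: "k > 0" using kin by simp
        define E where "E = 1 - exp (- k)"
        have E0: "E > 0" using kp E_def by simp
        have kle: "k \<le> vbar / c * E" using K kin E_def by auto
        define va where "va = c * k / E"
        have "va \<le> vbar" using kle E0 c unfolding va_def
          by (simp add: field_simps)
        moreover have "va \<ge> 0" using c kp E0 va_def by simp
        moreover have "k = Psi_inf L mu q c k (\<lambda>_. 0) va 1"
          unfolding Psi_inf_def using c E0 by (simp add: va_def E_def[symmetric])
        ultimately show ?thesis unfolding K_set_def using kp
          by (intro CollectI conjI exI[of _ "\<lambda>_. 0"] exI[of _ va] exI[of _ 1]) auto
      qed
    qed
  qed
qed

end
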